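(* Consider the decoding setting fixed in the context. Let $t_j=|\mathcal{A}_j|$ and run the index-collision-resolution procedure with $\hat t_j=t_j$, which terminates after $\tau$ iterations. Assume that (no $E_1$) $t_j\le T$, and that (no $E_2$) whenever, during this run, the decoder $D$ of $\mathcal{C}$ is applied to a vector of the form $[\mathbf{c}+\tilde{\mathbf{z}}_j/2^{\ell}]\bmod 2$ with $\mathbf{c}\in\mathcal{C}$ and $\ell$ a nonnegative integer, it outputs $\mathbf{c}$. Then for every $\ell\ge1$ (with $\ell\le\tau$), $\mathcal{U}(\mathcal{A}^{(\ell)}_j)=\bigcup_{\ell'=\ell}^{\tau}\mathcal{L}^{(\ell')}$.
   Context: Codes. Let $\mathbf{H}\in\{0,1\}^{m_p\times n_p}$ be a parity-check matrix of a binary linear code $\mathcal{C}_{\mathrm{aux}}$ of length $n_p$ with minimum Hamming distance $d$, and let $T=\lfloor (d-1)/2\rfloor$; denote the $u$-th column of $\mathbf{H}$ by $\mathbf{h}_u$. Let $\mathbf{G}\in\{0,1\}^{m_p\times n}$ be a generator matrix (full row rank) of a binary linear code $\mathcal{C}$ of length $n$ and dimension $m_p$. For $u\in\{1,\dots,n_p\}$ put $\mathbf{c}(u)=\mathbf{h}_u^T\mathbf{G}\bmod 2$ and define $\mathbf{x}(u)\in\mathbb{R}^n$ componentwise by $\mathbf{x}(u)_k=2a(\mathbf{c}(u)_k-1/2)$, where $a>0$ is fixed. Channel. In sub-block $j$, a finite set $\mathcal{A}_j$ of users transmits; user $i\in\mathcal{A}_j$ chose $u_i\in\{1,\dots,n_p\}$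 and sends $\mathbf{x}_{i,j}=\mathbf{x}(u_i)$. The received vector is $\mathbf{y}_j=\sum_{i\in\mathcal{A}_j}\mathbf{x}(u_i)+\mathbf{z}_j$ with noise $\mathbf{z}_j\in\mathbb{R}^n$; put $\tilde{\mathbf{z}}_j=\mathbf{z}_j/(2a)$. "$\bmod 2$" on real vectors is componentwise reduction into $[0,2)$. Basic decoder $\Phi$. For $\mathbf{y}\in\mathbb{R}^n$ and integer $\hat t\ge0$: form $\tilde{\mathbf{y}}=[\mathbf{y}/(2a)+\hat t/2]\bmod 2$; apply a decoder $D$ for $\mathcal{C}$, obtaining $\tilde{\mathbf{c}}\in\mathcal{C}$ (or a flagged error); recover the unique $\tilde{\mathbf{h}}$ with $\tilde{\mathbf{h}}^T\mathbf{G}=\tilde{\mathbf{c}}\bmod 2$; apply the bounded-distance syndrome decoder of $\mathcal{C}_{\mathrm{aux}}$, which returns the unique $S\subseteq\{1,\dots,n_p\}$ with $|S|\le T$ and $\sum_{u\in S}\mathbf{h}_u=\tilde{\mathbf{h}}\bmod 2$ if it exists and flags an error otherwise. $\Phi(\mathbf{y},\hat t)$ is the returned set (or $\emptyset$ with a flagged error). ICR procedure for an estimate $\hat t_j$: $\mathbf{y}^{(1)}_j=\mathbf{y}_j$, $\hat t^{(1)}_j=\hat t_j$, $\mathcal{L}^{(1)}=\Phi(\mathbf{y}^{(1)}_j,\hat t^{(1)}_j)$. For $\ell\ge1$: if $|\mathcal{L}^{(\ell)}|=\hat t^{(\ell)}_j$, stop with $\tau=\ell$ and return $\mathcal{L}^{(1)},\dots,\mathcal{L}^{(\tau)}$;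 if $|\mathcal{L}^{(\ell)}|>\hat t^{(\ell)}_j$, return an error; if $|\mathcal{L}^{(\ell)}|<\hat t^{(\ell)}_j$, set $\hat t^{(\ell+1)}_j=(\hat t^{(\ell)}_j-|\mathcal{L}^{(\ell)}|)/2$ (error if not an integer), $\mathbf{y}^{(\ell+1)}_j=(\mathbf{y}^{(\ell)}_j-\sum_{u\in\mathcal{L}^{(\ell)}}\mathbf{x}(u))/2$, $\mathcal{L}^{(\ell+1)}=\Phi(\mathbf{y}^{(\ell+1)}_j,\hat t^{(\ell+1)}_j)$, and continue. Auxiliary sets. For $u\in\{1,\dots,n_p\}$ let $\mathcal{A}^{(1)}_j(u)=\{i\in\mathcal{A}_j:u_i=u\}$. For $\ell\ge1$, let $\mathcal{B}^{(\ell)}_j(u)\subseteq\mathcal{A}^{(\ell)}_j(u)$ be an (arbitrary) subset with $|\mathcal{B}^{(\ell)}_j(u)|=2\lfloor|\mathcal{A}^{(\ell)}_j(u)|/2\rfloor$, and $\mathcal{A}^{(\ell+1)}_j(u)\subseteq\mathcal{B}^{(\ell)}_j(u)$ an (arbitrary) subset with $|\mathcal{A}^{(\ell+1)}_j(u)|=|\mathcal{B}^{(\ell)}_j(u)|/2$. Put $\mathcal{A}^{(\ell)}_j=\bigcup_u\mathcal{A}^{(\ell)}_j(u)$, $\mathcal{B}^{(\ell)}_j=\bigcup_u\mathcal{B}^{(\ell)}_j(u)$. For a set $\mathcal{S}$ of users, $\mathcal{U}(\mathcal{S})=\{u_i:i\in\mathcal{S}\}$. *)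

theory Defs
  imports Complex_Main
begin

text \<open>Binary vectors/matrices are integer-valued functions with entries in {0,1};
  arithmetic over GF(2) is integer arithmetic followed by mod 2.
  Index sets: rows of H and G are the finite type 'm (so m_p = CARD('m)),
  columns of H are the finite type 'p (so n_p = CARD('p)), code coordinates are
  the finite type 'n (so n = CARD('n)).\<close>

definition binary :: "('a \<Rightarrow> int) \<Rightarrow> bool" where
  "binary v \<longleftrightarrow> (\<forall>x. v x \<in> {0, 1})"

definition binary_mat :: "('a \<Rightarrow> 'b \<Rightarrow> int) \<Rightarrow> bool" where
  "binary_mat M \<longleftrightarrow> (\<forall>r c. M r c \<in> {0, 1})"

definition encode :: "('m::finite \<Rightarrow> 'n \<Rightarrow> int) \<Rightarrow> ('m \<Rightarrow> int) \<Rightarrow> ('n \<Rightarrow> int)" where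
  "encode G h = (\<lambda>k. (\<Sum>r\<in>UNIV. h r * G r k) mod 2)"

definition full_row_rank2 :: "('m::finite \<Rightarrow> 'n \<Rightarrow> int) \<Rightarrow> bool" where
  "full_row_rank2 G \<longleftrightarrow> (\<forall>h. binary h \<longrightarrow> encode G h = (\<lambda>_. 0) \<longrightarrow> h = (\<lambda>_. 0))"

definition code_gen :: "('m::finite \<Rightarrow> 'n \<Rightarrow> int) \<Rightarrow> ('n \<Rightarrow> int) set" where
  "code_gen G = {encode G h | h. binary h}"

definition code_pc :: "('m::finite \<Rightarrow> 'p::finite \<Rightarrow> int) \<Rightarrow> ('p \<Rightarrow> int) set" where
  "code_pc H = {x. binary x \<and> (\<forall>r. (\<Sum>u\<in>UNIV. H r u * x u) mod 2 = 0)}"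

definition hweight :: "('a \<Rightarrow> int) \<Rightarrow> nat" where
  "hweight x = card {i. x i \<noteq> 0}"

definition is_min_dist :: "('a \<Rightarrow> int) set \<Rightarrow> nat \<Rightarrow> bool" where
  "is_min_dist K d \<longleftrightarrow>
     (\<exists>x\<in>K. x \<noteq> (\<lambda>_. 0) \<and> hweight x = d) \<and> (\<forall>x\<in>K. x \<noteq> (\<lambda>_. 0) \<longrightarrow> d \<le> hweight x)"

definition hcol :: "('m \<Rightarrow> 'p \<Rightarrow> int) \<Rightarrow> 'p \<Rightarrow> ('m \<Rightarrow> int)" where
  "hcol H u = (\<lambda>r. H r u)"

definition cw :: "('m::finite \<Rightarrow> 'p \<Rightarrow> int) \<Rightarrow> ('m \<Rightarrow> 'n \<Rightarrow> int) \<Rightarrow> 'p \<Rightarrow> ('n \<Rightarrow> int)" where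
  "cw H G u = encode G (hcol H u)"

definition xsig :: "real \<Rightarrow> ('m::finite \<Rightarrow> 'p \<Rightarrow> int) \<Rightarrow> ('m \<Rightarrow> 'n \<Rightarrow> int) \<Rightarrow> 'p \<Rightarrow> ('n \<Rightarrow> real)" where
  "xsig a H G u = (\<lambda>k. 2 * a * (real_of_int (cw H G u k) - 1/2))"

definition rmod2 :: "real \<Rightarrow> real" where
  "rmod2 x = x - 2 * of_int \<lfloor>x / 2\<rfloor>"

text \<open>Bounded-distance syndrome decoder of C_aux: the unique S with |S| <= T and
  sum of columns h_u (u in S) equal to s mod 2, if it exists; None = flagged error.\<close>
definition syn_sum :: "('m \<Rightarrow> 'p \<Rightarrow> int) \<Rightarrow> 'p set \<Rightarrow> ('m \<Rightarrow> int)" where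
  "syn_sum H S = (\<lambda>r. (\<Sum>u\<in>S. H r u) mod 2)"

definition syn_dec :: "('m \<Rightarrow> 'p::finite \<Rightarrow> int) \<Rightarrow> nat \<Rightarrow> ('m \<Rightarrow> int) \<Rightarrow> 'p set option" where
  "syn_dec H T s =
     (if \<exists>!S. card S \<le> T \<and> syn_sum H S = s
      then Some (THE S. card S \<le> T \<and> syn_sum H S = s) else None)"

definition dec_input :: "real \<Rightarrow> ('n \<Rightarrow> real) \<Rightarrow> nat \<Rightarrow> ('n \<Rightarrow> real)" where
  "dec_input a y t = (\<lambda>k. rmod2 (y k / (2 * a) + real t / 2))"

text \<open>Basic decoder Phi; D returns None for a flagged error. On an error Phi returns {}.\<close>
definition Phi ::
  "real \<Rightarrow> ('m::finite \<Rightarrow> 'p::finite \<Rightarrow> int) \<Rightarrow> ('m \<Rightarrow> 'n \<Rightarrow> int) \<Rightarrow> nat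
   \<Rightarrow> (('n \<Rightarrow> real) \<Rightarrow> ('n \<Rightarrow> int) option) \<Rightarrow> ('n \<Rightarrow> real) \<Rightarrow> nat \<Rightarrow> 'p set" where
  "Phi a H G T D y t =
     (case D (dec_input a y t) of
        None \<Rightarrow> {}
      | Some c \<Rightarrow>
          (case syn_dec H T (THE h. binary h \<and> encode G h = c) of
             None \<Rightarrow> {}
           | Some S \<Rightarrow> S))"

text \<open>ICR state: icr_st ... l = (y^(l+1), t^(l+1)) (index shift by one).\<close>
primrec icr_st ::
  "real \<Rightarrow> ('m::finite \<Rightarrow> 'p::finite \<Rightarrow> int) \<Rightarrow> ('m \<Rightarrow> 'n \<Rightarrow> int) \<Rightarrow> nat
   \<Rightarrow> (('n \<Rightarrow> real) \<Rightarrow> ('n \<Rightarrow> int) option) \<Rightarrow> ('n \<Rightarrow> real) \<Rightarrow> nat \<Rightarrow> nat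
   \<Rightarrow> ('n \<Rightarrow> real) \<times> nat" where
  "icr_st a H G T D y t 0 = (y, t)"
| "icr_st a H G T D y t (Suc l) =
     (let yl = fst (icr_st a H G T D y t l); tl = snd (icr_st a H G T D y t l);
          L = Phi a H G T D yl tl
      in ((\<lambda>k. (yl k - (\<Sum>u\<in>L. xsig a H G u k)) / 2), (tl - card L) div 2))"

text \<open>For l >= 1: y^(l), t-hat^(l), L^(l) of the ICR run started at (y, t).\<close>
definition icr_y where "icr_y a H G T D y t l = fst (icr_st a H G T D y t (l - 1))"
definition icr_t where "icr_t a H G T D y t l = snd (icr_st a H G T D y t (l - 1))"
definition icr_L where
  "icr_L a H G T D y t l = Phi a H G T D (icr_y a H G T D y t l) (icr_t a H G T D y t l)"

definition icr_stops_at where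
  "icr_stops_at a H G T D y t \<tau> \<longleftrightarrow> 1 \<le> \<tau> \<and>
     (\<forall>l\<in>{1..<\<tau>}. card (icr_L a H G T D y t l) < icr_t a H G T D y t l \<and>
                    even (icr_t a H G T D y t l - card (icr_L a H G T D y t l))) \<and>
     card (icr_L a H G T D y t \<tau>) = icr_t a H G T D y t \<tau>"

end

theory Submission imports Defs begin

lemma mod2_sum_cong:
  fixes f g :: "'a \<Rightarrow> int"
  assumes "\<And>x. x \<in> A \<Longrightarrow> f x mod 2 = g x mod 2"
  shows "(\<Sum>x\<in>A. f x) mod 2 = (\<Sum>x\<in>A. g x) mod 2"
proof -
  have "(\<Sum>x\<in>A. f x) mod 2 = (\<Sum>x\<in>A. f x mod 2) mod 2" by (simp add: mod_sum_eq)
  also have "\<dots> = (\<Sum>x\<in>A. g x mod 2) mod 2" by (rule arg_cong[where f="\<lambda>s. s mod 2"], rule sum.cong, simp_all add: assms)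
  also have "\<dots> = (\<Sum>x\<in>A. g x) mod 2" by (simp add: mod_sum_eq)
  finally show ?thesis .
qed

lemma rmod2_shift: "rmod2 (x + 2 * of_int j) = rmod2 x"
proof -
  have "\<lfloor>(x + 2 * of_int j) / 2\<rfloor> = \<lfloor>x / 2\<rfloor> + j"
    by (metis add_divide_distrib floor_add_int nonzero_mult_div_cancel_left zero_neq_numeral)
  then show ?thesis unfolding rmod2_def by simp
qed

lemma rmod2_cong:
  assumes "m mod 2 = c mod 2"
  shows "rmod2 (real_of_int m + w) = rmod2 (real_of_int c + w)"
proof -
  have "2 dvd m - c" using assms by (simp only: mod_eq_dvd_iff)
  then obtain j where "m - c = 2 * j" by (rule dvdE)
  then have "m = c + 2 * j" by simp
  then have "real_of_int m + w = (real_of_int c + w) + 2 * of_int j" by simp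
  then show ?thesis by (simp only: rmod2_shift)
qed

lemma syn_unique:
  fixes H :: "'m::finite \<Rightarrow> 'p::finite \<Rightarrow> int"
  assumes d: "is_min_dist (code_pc H) d" and T: "T = (d - 1) div 2"
    and c1: "card S1 \<le> T" and c2: "card S2 \<le> T" and eq: "syn_sum H S1 = syn_sum H S2"
  shows "S1 = S2"
proof (rule ccontr)
  assume ne: "S1 \<noteq> S2"
  define Dl where "Dl = (S1 - S2) \<union> (S2 - S1)"
  define x where "x = (\<lambda>u. if u \<in> Dl then 1 else 0 :: int)"
  have "Dl \<noteq> {}" using ne unfolding Dl_def by auto
  then have xnz: "x \<noteq> (\<lambda>_. 0)" unfolding x_def by (metis equals0I one_neq_zero)
  have hw: "hweight x = card Dl" proof -
    have "{i. x i \<noteq> 0} = Dl" unfolding x_def by auto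
    then show ?thesis unfolding hweight_def by simp
  qed
  have "x \<in> code_pc H"
    unfolding code_pc_def
  proof (intro CollectI conjI allI)
    show "binary x" unfolding binary_def x_def by auto
    fix r
    have s: "(\<Sum>u\<in>UNIV. H r u * x u) = (\<Sum>u\<in>Dl. H r u)"
      unfolding x_def by (simp add: sum.If_cases if_distrib cong: if_cong)
    have a1: "(\<Sum>u\<in>S1. H r u) = (\<Sum>u\<in>S1 - S2. H r u) + (\<Sum>u\<in>S1 \<inter> S2. H r u)"
      using sum.Int_Diff[of S1 "H r" S2] by simp
    have a2: "(\<Sum>u\<in>S2. H r u) = (\<Sum>u\<in>S2 - S1. H r u) + (\<Sum>u\<in>S1 \<inter> S2. H r u)"
      using sum.Int_Diff[of S2 "H r" S1] by (simp add: Int_commute)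
    have a3: "(\<Sum>u\<in>Dl. H r u) = (\<Sum>u\<in>S1 - S2. H r u) + (\<Sum>u\<in>S2 - S1. H r u)"
      unfolding Dl_def by (rule sum.union_disjoint) auto
    have "(\<Sum>u\<in>S1. H r u) mod 2 = (\<Sum>u\<in>S2. H r u) mod 2"
      using eq unfolding syn_sum_def by meson
    then have "((\<Sum>u\<in>S1. H r u) + (\<Sum>u\<in>S2. H r u)) mod 2 = 0"
      by (metis mod_add_eq mult_2 mod_mult_self1_is_0 mult.commute)
    then show "(\<Sum>u\<in>UNIV. H r u * x u) mod 2 = 0"
      proof -
      have "(\<Sum>u\<in>S1. H r u) + (\<Sum>u\<in>S2. H r u) = (\<Sum>u\<in>UNIV. H r u * x u) + 2 * (\<Sum>u\<in>S1 \<inter> S2. H r u)"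
        using s a1 a2 a3 by simp
      then show ?thesis using \<open>((\<Sum>u\<in>S1. H r u) + (\<Sum>u\<in>S2. H r u)) mod 2 = 0\<close> by simp
    qed
  qed
  then have "d \<le> card Dl" using d xnz hw unfolding is_min_dist_def by auto
  moreover have "card Dl \<le> card S1 + card S2"
    unfolding Dl_def by (meson card_Un_le Diff_subset card_mono finite add_mono order_trans)
  moreover have "d \<ge> 1"
  proof -
    obtain x0 where "x0 \<in> code_pc H" "x0 \<noteq> (\<lambda>_. 0)" "hweight x0 = d" using d unfolding is_min_dist_def by auto
    then obtain i where "x0 i \<noteq> 0" by auto
    then have "{i. x0 i \<noteq> 0} \<noteq> {}" by auto
    then show ?thesis using \<open>hweight x0 = d\<close> unfolding hweight_def
      by (metis card_0_eq finite less_one not_le)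
  qed
  ultimately show False using c1 c2 T by linarith
qed

lemma cong_main:
  fixes H :: "'m::finite \<Rightarrow> 'p::finite \<Rightarrow> int" and G :: "'m \<Rightarrow> 'n \<Rightarrow> int" and n :: "'p \<Rightarrow> nat"
  shows "(\<Sum>v\<in>UNIV. int (n v) * cw H G v k) mod 2 = encode G (syn_sum H {v. odd (n v)}) k mod 2"
proof -
  define S where "S = {v. odd (n v)}"
  have "(\<Sum>v\<in>UNIV. int (n v) * cw H G v k) mod 2 = (\<Sum>v\<in>UNIV. int (n v) * (\<Sum>r\<in>UNIV. H r v * G r k)) mod 2"
    unfolding cw_def encode_def hcol_def by (rule mod2_sum_cong) (simp add: mod_mult_right_eq)
  also have "(\<Sum>v\<in>UNIV. int (n v) * (\<Sum>r\<in>UNIV. H r v * G r k)) = (\<Sum>r\<in>UNIV. (\<Sum>v\<in>UNIV. int (n v) * H r v) * G r k)"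
  proof -
    have "(\<Sum>v\<in>UNIV. int (n v) * (\<Sum>r\<in>UNIV. H r v * G r k)) = (\<Sum>v\<in>UNIV. \<Sum>r\<in>UNIV. int (n v) * H r v * G r k)"
      by (simp add: sum_distrib_left mult.assoc)
    also have "\<dots> = (\<Sum>r\<in>UNIV. \<Sum>v\<in>UNIV. int (n v) * H r v * G r k)" by (rule sum.swap)
    also have "\<dots> = (\<Sum>r\<in>UNIV. (\<Sum>v\<in>UNIV. int (n v) * H r v) * G r k)" by (simp add: sum_distrib_right)
    finally show ?thesis .
  qed
  also have "\<dots> mod 2 = (\<Sum>r\<in>UNIV. syn_sum H S r * G r k) mod 2"
  proof (rule mod2_sum_cong)
    fix r
    have "(\<Sum>v\<in>UNIV. int (n v) * H r v) mod 2 = (\<Sum>v\<in>UNIV. if v \<in> S then H r v else 0) mod 2"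
    proof (rule mod2_sum_cong)
      fix v
      have "int (n v) * H r v mod 2 = (int (n v) mod 2) * H r v mod 2" by (simp add: mod_mult_left_eq)
      moreover have "int (n v) mod 2 = (if v \<in> S then 1 else 0)"
      proof -
        have "int (n v) mod 2 = int (n v mod 2)" by (simp add: of_nat_mod)
        moreover have "n v mod 2 = (if v \<in> S then 1 else 0)" unfolding S_def mem_Collect_eq by presburger
        ultimately show ?thesis by simp
      qed
      ultimately show "int (n v) * H r v mod 2 = (if v \<in> S then H r v else 0) mod 2" by simp
    qed
    also have "(\<Sum>v\<in>UNIV. if v \<in> S then H r v else 0) = (\<Sum>v\<in>S. H r v)"
      by (simp add: sum.If_cases)
    finally have "(\<Sum>v\<in>UNIV. int (n v) * H r v) mod 2 = syn_sum H S r mod 2"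
      unfolding syn_sum_def by simp
    then show "(\<Sum>v\<in>UNIV. int (n v) * H r v) * G r k mod 2 = syn_sum H S r * G r k mod 2"
      by (metis mod_mult_left_eq)
  qed
  also have "\<dots> = encode G (syn_sum H S) k mod 2" unfolding encode_def by simp
  finally show ?thesis unfolding S_def .
qed

lemma phi_ok:
  fixes a :: real and H :: "'m::finite \<Rightarrow> 'p::finite \<Rightarrow> int" and G :: "'m \<Rightarrow> 'n::finite \<Rightarrow> int"
    and n :: "'p \<Rightarrow> nat" and D :: "('n \<Rightarrow> real) \<Rightarrow> ('n \<Rightarrow> int) option"
  assumes a_pos: "a > 0" and G_rank: "full_row_rank2 G"
    and d_def: "is_min_dist (code_pc H) d" and T_def: "T = (d - 1) div 2"
    and sumle: "(\<Sum>v\<in>UNIV. n v) \<le> T"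
    and DE: "\<And>c. c \<in> code_gen G \<Longrightarrow>
       dec_input a y t = (\<lambda>k. rmod2 (real_of_int (c k) + (z k / (2 * a)) / 2 ^ e)) \<Longrightarrow>
       D (dec_input a y t) = Some c"
    and y_eq: "y = (\<lambda>k. (\<Sum>v\<in>UNIV. real (n v) * xsig a H G v k) + z k / 2 ^ e)"
    and t_eq: "t = (\<Sum>v\<in>UNIV. n v)"
  shows "Phi a H G T D y t = {v. odd (n v)}"
proof -
  define S where "S = {v. odd (n v)}"
  define h0 where "h0 = syn_sum H S"
  define c where "c = encode G h0"
  have h0bin: "binary h0" unfolding binary_def h0_def syn_sum_def by auto
  have cC: "c \<in> code_gen G" unfolding code_gen_def c_def using h0bin by blast
  have din: "dec_input a y t = (\<lambda>k. rmod2 (real_of_int (c k) + (z k / (2 * a)) / 2 ^ e))"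
  proof
    fix k
    define m where "m = (\<Sum>v\<in>UNIV. int (n v) * cw H G v k)"
    have xs: "(\<Sum>v\<in>UNIV. real (n v) * xsig a H G v k)
        = 2 * a * real_of_int m - a * (\<Sum>v\<in>UNIV. real (n v))"
      unfolding xsig_def m_def
      by (simp add: sum_distrib_left sum_subtractf algebra_simps)
    have eqn: "y k / (2 * a) + real t / 2 = real_of_int m + (z k / (2 * a)) / 2 ^ e"
      using a_pos unfolding y_eq t_eq by (simp add: xs field_simps)
    have mc: "m mod 2 = c k mod 2" unfolding m_def c_def h0_def S_def by (rule cong_main)
    have "dec_input a y t k = rmod2 (y k / (2 * a) + real t / 2)" by (simp only: dec_input_def)
    also have "\<dots> = rmod2 (real_of_int m + (z k / (2 * a)) / 2 ^ e)" by (simp only: eqn)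
    also have "\<dots> = rmod2 (real_of_int (c k) + (z k / (2 * a)) / 2 ^ e)" by (rule rmod2_cong[OF mc])
    finally show "dec_input a y t k = rmod2 (real_of_int (c k) + (z k / (2 * a)) / 2 ^ e)" .
  qed
  have Dc: "D (dec_input a y t) = Some c" using DE[OF cC din] .
  have the: "(THE h. binary h \<and> encode G h = c) = h0"
  proof (rule the_equality)
    show "binary h0 \<and> encode G h0 = c" using h0bin c_def by simp
    fix h assume h: "binary h \<and> encode G h = c"
    define w where "w = (\<lambda>r. (h r - h0 r) mod 2)"
    have wb: "binary w" unfolding binary_def w_def by auto
    have "encode G w = (\<lambda>_. 0)"
    proof
      fix k
      have "encode G w k = (\<Sum>r\<in>UNIV. (h r - h0 r) * G r k) mod 2"
        unfolding encode_def w_def by (rule mod2_sum_cong) (simp add: mod_mult_left_eq)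
      also have "\<dots> = ((\<Sum>r\<in>UNIV. h r * G r k) - (\<Sum>r\<in>UNIV. h0 r * G r k)) mod 2"
        by (simp add: sum_subtractf left_diff_distrib)
      also have "\<dots> = 0"
      proof -
        have "(\<Sum>r\<in>UNIV. h r * G r k) mod 2 = (\<Sum>r\<in>UNIV. h0 r * G r k) mod 2"
          using h c_def unfolding encode_def by meson
        then have "2 dvd (\<Sum>r\<in>UNIV. h r * G r k) - (\<Sum>r\<in>UNIV. h0 r * G r k)" by (simp only: mod_eq_dvd_iff)
        then show ?thesis by (simp only: dvd_imp_mod_0)
      qed
      finally show "encode G w k = 0" .
    qed
    then have "w = (\<lambda>_. 0)" using G_rank wb unfolding full_row_rank2_def by blast
    show "h = h0"
    proof
      fix r
      have "(h r - h0 r) mod 2 = 0" using \<open>w = (\<lambda>_. 0)\<close> unfolding w_def by meson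
      moreover have "h r \<in> {0,1}" "h0 r \<in> {0,1}" using h h0bin unfolding binary_def by auto
      ultimately show "h r = h0 r" by auto
    qed
  qed
  have cardS: "card S \<le> T"
  proof -
    have "card S = (\<Sum>v\<in>S. 1)" by simp
    also have "\<dots> \<le> (\<Sum>v\<in>S. n v)" unfolding S_def
      by (rule sum_mono) (simp, presburger)
    also have "\<dots> \<le> (\<Sum>v\<in>UNIV. n v)" by (rule sum_mono2) auto
    finally show ?thesis using sumle by simp
  qed
  have ex1: "\<exists>!S'. card S' \<le> T \<and> syn_sum H S' = h0"
  proof (rule ex1I[of _ S])
    show "card S \<le> T \<and> syn_sum H S = h0" using cardS h0_def by simp
    fix S' assume "card S' \<le> T \<and> syn_sum H S' = h0"
    then show "S' = S" using syn_unique[OF d_def T_def, of S' S] cardS h0_def by simp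
  qed
  have "(THE S'. card S' \<le> T \<and> syn_sum H S' = h0) = S"
    by (rule the1_equality[OF ex1]) (use cardS h0_def in simp)
  then have syn: "syn_dec H T h0 = Some S" unfolding syn_dec_def using ex1 by simp
  show ?thesis unfolding Phi_def by (simp add: Dc the syn S_def)
qed

lemma icr_step:
  assumes "1 \<le> l"
  shows "icr_y a H G T D y t (Suc l) = (\<lambda>k. (icr_y a H G T D y t l k - (\<Sum>u\<in>icr_L a H G T D y t l. xsig a H G u k)) / 2)"
    and "icr_t a H G T D y t (Suc l) = (icr_t a H G T D y t l - card (icr_L a H G T D y t l)) div 2"
  using assms unfolding icr_y_def icr_t_def icr_L_def
  by (cases l; simp add: Let_def)+

lemma sum_fiber:
  fixes f :: "'p::finite \<Rightarrow> 'b::comm_semiring_1"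
  assumes "finite A"
  shows "(\<Sum>i\<in>A. f (uu i)) = (\<Sum>v\<in>UNIV. of_nat (card {i \<in> A. uu i = v}) * f v)"
proof -
  have "(\<Sum>i\<in>A. f (uu i)) = (\<Sum>v\<in>UNIV. \<Sum>i\<in>{i \<in> A. uu i = v}. f (uu i))"
    using sum.group[OF assms finite_UNIV, of uu "\<lambda>i. f (uu i)"] by simp
  also have "\<dots> = (\<Sum>v\<in>UNIV. of_nat (card {i \<in> A. uu i = v}) * f v)"
    by (rule sum.cong) auto
  finally show ?thesis .
qed


theorem corollary1:
  fixes a :: real
    and H :: "'m::finite \<Rightarrow> 'p::finite \<Rightarrow> int"
    and G :: "'m \<Rightarrow> 'n::finite \<Rightarrow> int"
    and d T :: nat
    and D :: "('n \<Rightarrow> real) \<Rightarrow> ('n \<Rightarrow> int) option"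
    and Aj :: "'i set"
    and uu :: "'i \<Rightarrow> 'p"
    and z :: "'n \<Rightarrow> real"
    and \<tau> :: nat
    and AA BB :: "nat \<Rightarrow> 'p \<Rightarrow> 'i set"
  assumes a_pos: "a > 0"
    and H_bin: "binary_mat H"
    and G_bin: "binary_mat G"
    and G_rank: "full_row_rank2 G"
    and d_def: "is_min_dist (code_pc H) d"
    and T_def: "T = (d - 1) div 2"
    and D_range: "\<And>v c. D v = Some c \<Longrightarrow> c \<in> code_gen G"
    and Aj_fin: "finite Aj"
    and stops: "icr_stops_at a H G T D (\<lambda>k. (\<Sum>i\<in>Aj. xsig a H G (uu i) k) + z k) (card Aj) \<tau>"
    and no_E1: "card Aj \<le> T"
    and no_E2: "\<And>l c e. l \<in> {1..\<tau>} \<Longrightarrow> c \<in> code_gen G \<Longrightarrow>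
        dec_input a (icr_y a H G T D (\<lambda>k. (\<Sum>i\<in>Aj. xsig a H G (uu i) k) + z k) (card Aj) l)
                    (icr_t a H G T D (\<lambda>k. (\<Sum>i\<in>Aj. xsig a H G (uu i) k) + z k) (card Aj) l)
          = (\<lambda>k. rmod2 (real_of_int (c k) + (z k / (2 * a)) / 2 ^ e)) \<Longrightarrow>
        D (dec_input a (icr_y a H G T D (\<lambda>k. (\<Sum>i\<in>Aj. xsig a H G (uu i) k) + z k) (card Aj) l)
                    (icr_t a H G T D (\<lambda>k. (\<Sum>i\<in>Aj. xsig a H G (uu i) k) + z k) (card Aj) l))
          = Some c"
    and AA_1: "\<And>v. AA 1 v = {i \<in> Aj. uu i = v}"
    and BB_sub: "\<And>l v. 1 \<le> l \<Longrightarrow> BB l v \<subseteq> AA l v"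
    and BB_card: "\<And>l v. 1 \<le> l \<Longrightarrow> card (BB l v) = 2 * (card (AA l v) div 2)"
    and AA_sub: "\<And>l v. 1 \<le> l \<Longrightarrow> AA (Suc l) v \<subseteq> BB l v"
    and AA_card: "\<And>l v. 1 \<le> l \<Longrightarrow> card (AA (Suc l) v) = card (BB l v) div 2"
  shows "\<forall>l\<in>{1..\<tau>}. uu ` (\<Union>v. AA l v) =
           (\<Union>l'\<in>{l..\<tau>}. icr_L a H G T D (\<lambda>k. (\<Sum>i\<in>Aj. xsig a H G (uu i) k) + z k) (card Aj) l')"
proof -
  define Y where "Y = (\<lambda>k. (\<Sum>i\<in>Aj. xsig a H G (uu i) k) + z k)"
  define t0 where "t0 = card Aj"
  define n where "n = (\<lambda>l v. card (AA l v))"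
  define iy where "iy = icr_y a H G T D Y t0"
  define it where "it = icr_t a H G T D Y t0"
  define iL where "iL = icr_L a H G T D Y t0"
  note stops' = stops[folded Y_def t0_def, unfolded icr_stops_at_def, folded iL_def it_def]
  have AAsub1: "AA l v \<subseteq> AA 1 v" if "1 \<le> l" for l v
    using that
  proof (induction l)
    case 0 then show ?case by simp
  next
    case (Suc l)
    show ?case
    proof (cases "l = 0")
      case True then show ?thesis by simp
    next
      case False
      then have "1 \<le> l" by simp
      then show ?thesis using Suc.IH AA_sub BB_sub by blast
    qed
  qed
  have finAA: "finite (AA l v)" if "1 \<le> l" for l v
    using AAsub1[OF that] AA_1 Aj_fin by (metis (no_types, lifting) finite_subset mem_Collect_eq subsetI)
  have nSuc: "n (Suc l) v = n l v div 2" if "1 \<le> l" for l v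
    unfolding n_def using AA_card[OF that] BB_card[OF that] by simp
  have nmono: "n l' v \<le> n l v" if "1 \<le> l" "l \<le> l'" for l l' v
    using that(2)
  proof (induction l' rule: dec_induct)
    case base then show ?case by simp
  next
    case (step m)
    then show ?case using nSuc[of m v] that(1) by simp
  qed
  have n1: "n 1 v = card {i \<in> Aj. uu i = v}" for v unfolding n_def using AA_1 by simp
  have cardAj: "card Aj = (\<Sum>v\<in>UNIV. n 1 v)"
    unfolding n1 using sum_fiber[OF Aj_fin, of "\<lambda>_. 1::nat" uu] by simp
  have sum_le: "(\<Sum>v\<in>UNIV. n l v) \<le> T" if "1 \<le> l" for l
  proof -
    have "(\<Sum>v\<in>UNIV. n l v) \<le> (\<Sum>v\<in>UNIV. n 1 v)" by (rule sum_mono) (use nmono[of 1 l] that in auto)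
    then show ?thesis using cardAj no_E1 by simp
  qed
  have Lchar: "iL l = {v. odd (n l v)}"
    if l: "1 \<le> l" "l \<le> \<tau>"
      and iv: "iy l = (\<lambda>k. (\<Sum>v\<in>UNIV. real (n l v) * xsig a H G v k) + z k / 2 ^ (l - 1))"
              "it l = (\<Sum>v\<in>UNIV. n l v)" for l
    unfolding iL_def icr_L_def
  proof (rule phi_ok[OF a_pos G_rank d_def T_def sum_le[OF l(1)]])
    fix c assume "c \<in> code_gen G"
      "dec_input a (icr_y a H G T D Y t0 l) (icr_t a H G T D Y t0 l) =
         (\<lambda>k. rmod2 (real_of_int (c k) + z k / (2 * a) / 2 ^ (l - 1)))"
    then show "D (dec_input a (icr_y a H G T D Y t0 l) (icr_t a H G T D Y t0 l)) = Some c"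
      using no_E2[of l c "l - 1"] l unfolding Y_def t0_def by simp
  qed (use iv in \<open>simp_all add: iy_def it_def\<close>)
  have inv: "iy l = (\<lambda>k. (\<Sum>v\<in>UNIV. real (n l v) * xsig a H G v k) + z k / 2 ^ (l - 1))
          \<and> it l = (\<Sum>v\<in>UNIV. n l v)" if "1 \<le> l" "l \<le> \<tau>" for l
    using that
  proof (induction l)
    case 0 then show ?case by simp
  next
    case (Suc l)
    show ?case
    proof (cases "l = 0")
      case True
      have "iy 1 = Y" "it 1 = t0" unfolding iy_def it_def icr_y_def icr_t_def by simp_all
      moreover have "Y = (\<lambda>k. (\<Sum>v\<in>UNIV. real (n 1 v) * xsig a H G v k) + z k / 2 ^ (1 - 1))"
        unfolding Y_def n1 using sum_fiber[OF Aj_fin, of "\<lambda>v. xsig a H G v _" uu] by simp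
      ultimately show ?thesis using True cardAj t0_def by simp
    next
      case False
      then have l1: "1 \<le> l" by simp
      have IH: "iy l = (\<lambda>k. (\<Sum>v\<in>UNIV. real (n l v) * xsig a H G v k) + z k / 2 ^ (l - 1))"
          "it l = (\<Sum>v\<in>UNIV. n l v)" using Suc l1 by auto
      have L: "iL l = {v. odd (n l v)}" using Lchar[OF l1 _ IH] Suc by simp
      have step1: "iy (Suc l) = (\<lambda>k. (iy l k - (\<Sum>u\<in>iL l. xsig a H G u k)) / 2)"
        "it (Suc l) = (it l - card (iL l)) div 2"
        unfolding iy_def it_def iL_def by (rule icr_step[OF l1])+
      have pw: "real (n l v) * xsig a H G v k - (if odd (n l v) then xsig a H G v k else 0)
          = 2 * (real (n (Suc l) v) * xsig a H G v k)" for v k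
      proof (cases "odd (n l v)")
        case True
        have m: "n l v = 2 * n (Suc l) v + 1" using True nSuc[OF l1] by presburger
        have "real (n l v) = 2 * real (n (Suc l) v) + 1" by (subst m) simp
        then show ?thesis using True by (simp add: algebra_simps)
      next
        case False
        have m: "n l v = 2 * n (Suc l) v" using False nSuc[OF l1] by presburger
        have "real (n l v) = 2 * real (n (Suc l) v)" by (subst m) simp
        then show ?thesis using False by (simp add: algebra_simps)
      qed
      have sy: "iy (Suc l) k = (\<Sum>v\<in>UNIV. real (n (Suc l) v) * xsig a H G v k) + z k / 2 ^ (Suc l - 1)" for k
      proof -
        have e1: "(\<Sum>u\<in>iL l. xsig a H G u k) = (\<Sum>v\<in>UNIV. if odd (n l v) then xsig a H G v k else 0)"
          unfolding L by (simp add: sum.If_cases)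
        have e2: "(\<Sum>v\<in>UNIV. real (n l v) * xsig a H G v k) - (\<Sum>v\<in>UNIV. if odd (n l v) then xsig a H G v k else 0)
            = 2 * (\<Sum>v\<in>UNIV. real (n (Suc l) v) * xsig a H G v k)"
          by (simp add: pw sum_distrib_left flip: sum_subtractf)
        have e3: "(2::real) ^ (Suc l - 1) = 2 * 2 ^ (l - 1)" using l1
          by (metis Suc_diff_le diff_Suc_1 power_Suc)
        show ?thesis unfolding step1 IH e1 e3 using e2 by (simp add: field_simps)
      qed
      have st: "it (Suc l) = (\<Sum>v\<in>UNIV. n (Suc l) v)"
      proof -
        have c1: "card (iL l) = (\<Sum>v\<in>UNIV. n l v mod 2)"
        proof -
          have "card (iL l) = (\<Sum>v\<in>UNIV. if odd (n l v) then 1 else 0)"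
            unfolding L by (simp add: sum.If_cases)
          also have "\<dots> = (\<Sum>v\<in>UNIV. n l v mod 2)"
            by (rule sum.cong) (auto simp: odd_iff_mod_2_eq_one)
          finally show ?thesis .
        qed
        have c2: "(\<Sum>v\<in>UNIV. n l v) = 2 * (\<Sum>v\<in>UNIV. n (Suc l) v) + (\<Sum>v\<in>UNIV. n l v mod 2)"
        proof -
          have "(\<Sum>v\<in>UNIV. n l v) = (\<Sum>v\<in>UNIV. 2 * n (Suc l) v + n l v mod 2)"
            by (rule sum.cong) (simp_all add: nSuc[OF l1])
          then show ?thesis by (simp add: sum.distrib sum_distrib_left)
        qed
        show ?thesis unfolding step1 IH c1 using c2 by simp
      qed
      show ?thesis using sy st by auto
    qed
  qed
  have Lall: "iL l = {v. odd (n l v)}" if "1 \<le> l" "l \<le> \<tau>" for l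
    using Lchar[OF that] inv[OF that] by blast
  have tau1: "1 \<le> \<tau>" using stops' by simp
  have ntau: "n \<tau> v \<le> 1" for v
  proof -
    have "card (iL \<tau>) = it \<tau>" using stops' by simp
    then have eq: "(\<Sum>v\<in>UNIV. if odd (n \<tau> v) then 1 else 0) = (\<Sum>v\<in>UNIV. n \<tau> v)"
      using Lall[OF tau1 order_refl] inv[OF tau1 order_refl] by (simp add: sum.If_cases)
    have "(if odd (n \<tau> v) then 1 else 0) = n \<tau> v"
      by (rule sum_mono_inv[OF eq]) (auto simp: Suc_le_eq odd_pos)
    then show ?thesis by (auto split: if_splits)
  qed
  have img: "uu ` (\<Union>v. AA l v) = {v. 0 < n l v}" if "1 \<le> l" for l
  proof
    show "uu ` (\<Union>v. AA l v) \<subseteq> {v. 0 < n l v}"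
    proof
      fix w assume "w \<in> uu ` (\<Union>v. AA l v)"
      then obtain i v where iv: "i \<in> AA l v" "w = uu i" by auto
      then have "uu i = v" using AAsub1[OF that] AA_1 by auto
      moreover have "0 < n l v" using iv(1) finAA[OF that] unfolding n_def by (auto simp: card_gt_0_iff)
      ultimately show "w \<in> {v. 0 < n l v}" using iv by simp
    qed
  next
    show "{v. 0 < n l v} \<subseteq> uu ` (\<Union>v. AA l v)"
    proof
      fix v assume "v \<in> {v. 0 < n l v}"
      then have "AA l v \<noteq> {}" unfolding n_def by auto
      then obtain i where "i \<in> AA l v" by blast
      moreover then have "uu i = v" using AAsub1[OF that] AA_1 by auto
      ultimately show "v \<in> uu ` (\<Union>v. AA l v)" by blast
    qed
  qed
  have reach: "\<exists>l'\<in>{l..\<tau>}. odd (n l' v)" if "1 \<le> l" "l \<le> \<tau>" "0 < n l v" for l v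
    using that
  proof (induction "\<tau> - l" arbitrary: l)
    case 0
    then have "l = \<tau>" by simp
    then have "n l v \<le> 1" using ntau[of v] by simp
    then have "n l v = 1" using 0 by simp
    then have "odd (n l v)" by simp
    then show ?case using 0 by auto
  next
    case (Suc k)
    show ?case
    proof (cases "odd (n l v)")
      case True then show ?thesis using Suc.prems by auto
    next
      case False
      then have "2 \<le> n l v" using Suc.prems(3) by presburger
      then have "0 < n (Suc l) v" using nSuc[OF Suc.prems(1)] by simp
      moreover have "\<tau> - Suc l = k" "Suc l \<le> \<tau>" using Suc.hyps(2) by auto
      ultimately have "\<exists>l'\<in>{Suc l..\<tau>}. odd (n l' v)"
        using Suc.hyps(1)[of "Suc l"] by simp
      then show ?thesis by fastforce
    qed
  qed
  show ?thesis
    unfolding Y_def[symmetric] t0_def[symmetric] iL_def[symmetric]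
  proof
    fix l assume l: "l \<in> {1..\<tau>}"
    then have l1: "1 \<le> l" "l \<le> \<tau>" by auto
    have "(\<Union>l'\<in>{l..\<tau>}. iL l') = (\<Union>l'\<in>{l..\<tau>}. {v. odd (n l' v)})"
      by (intro SUP_cong refl) (use Lall l1 in auto)
    also have "\<dots> = {v. 0 < n l v}"
    proof
      show "(\<Union>l'\<in>{l..\<tau>}. {v. odd (n l' v)}) \<subseteq> {v. 0 < n l v}"
      proof
        fix v assume "v \<in> (\<Union>l'\<in>{l..\<tau>}. {v. odd (n l' v)})"
        then obtain l' where "l' \<in> {l..\<tau>}" "odd (n l' v)" by auto
        then have "0 < n l' v" "n l' v \<le> n l v" using odd_pos nmono[of l l' v] l1 by auto
        then show "v \<in> {v. 0 < n l v}" by simp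
      qed
    next
      show "{v. 0 < n l v} \<subseteq> (\<Union>l'\<in>{l..\<tau>}. {v. odd (n l' v)})"
        using reach l1 by blast
    qed
    finally show "uu ` (\<Union>v. AA l v) = (\<Union>l'\<in>{l..\<tau>}. iL l')" using img l1 by simp
  qed
qed

end
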